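(* For any set $\mathcal{O}$ of upwards closed modalities, the logical preorder $\sqsubseteq_{\mathcal{V}^+}$ (on closed values and on closed computations of each type) is identical to applicative $\mathcal{O}$-similarity.
   Context: Language: types $\tau ::= \mathbf{1} \mid \mathbf{N} \mid \tau \to \tau'$; signature $\Sigma$ of effect operations with arities $\alpha^n\to\alpha$, $\mathbf{N}\times\alpha^n\to\alpha$, $\alpha^{\mathbf{N}}\to\alpha$ or $\mathbf{N}\times\alpha^{\mathbf{N}}\to\alpha$. Values $V ::= * \mid Z \mid S(V) \mid \lambda x{:}\tau.M \mid x$; computations $M ::= VW \mid \mathbf{return}\,V \mid \mathbf{let}\ M\Rightarrow x\ \mathbf{in}\ N \mid \mathbf{fix}(V) \mid \mathbf{case}\ V\ \mathbf{of}\ \{Z\Rightarrow M; S(x)\Rightarrow N\} \mid \sigma(M_0,\dots) \mid \sigma(V;M_0,\dots) \mid \sigma(V)\mid\sigma(V;W)$, simply typed call-by-value. $\mathit{Val}(\tau)$, $\mathit{Com}(\tau)$: closed values/computations; $\overline{n}=S^n(Z)$. Effect trees $TX$: possibly infinite trees with leaves $\bot$ or elements of $X$ and internal nodes labelled by effect operations $\sigma$ (or $\sigma_m$, $m\in\mathbb{N}$, for arities with a $\mathbf{N}$ parameter) with $n$ or $\mathbb{N}$-many children according to the arity; $t\le t'$ iff $t$ results from $t'$ by replacing subtrees with $\bot$. Each $M\in\mathit{Com}(\tau)$ has an operational effect tree $|M|\in T(\mathit{Val}(\tau))$ from call-by-value evaluation (leaves = returned values, nodes = effect operations encountered, $\bot$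 = divergence). Modalities: set $\mathcal{O}$, each $o$ with $[\![o]\!]\subseteq T\mathbf{1}$; for $t\in TX$, $P\subseteq X$, $t[\in P]\in T\mathbf{1}$ replaces leaves in $P$ by $*$ and other $X$-leaves by $\bot$; $o(A)=\{t\mid t[\in A]\in[\![o]\!]\}$. Upwards closed: $[\![o]\!]$ upward closed under $\le$. Logic $\mathcal{V}^+$: value formulas $VF(\tau)$ and computation formulas $CF(\tau)$: $\{n\}\in VF(\mathbf{N})$; $(V\mapsto\Phi)\in VF(\tau\to\tau')$ for $V\in\mathit{Val}(\tau)$, $\Phi\in CF(\tau')$; $o\,\phi\in CF(\tau)$ for $o\in\mathcal{O}$, $\phi\in VF(\tau)$; closed under arbitrary $\bigwedge,\bigvee$ (no negation). Semantics: $W\models\{n\}$ iff $W=\overline{n}$; $W\models(V\mapsto\Phi)$ iff $WV\models\Phi$; $M\models o\phi$ iff $|M|[\in\{V\mid V\models\phi\}]\in[\![o]\!]$. $V\sqsubseteq_{\mathcal{V}^+}W$ iff all formulas satisfied by $V$ are satisfied by $W$ (similarly for computations). Relator: for $R\subseteq X\times Y$ and $A\subseteq X$, $R[A]=\{y\mid\exists x\in A,\ xRy\}$; $t\,\mathcal{O}(R)\,t'$ iff $\forall A\subseteq X\ \forall o\in\mathcal{O}$, $t\in o(A)\Rightarrow t'\in o(R[A])$. An applicative $\mathcal{O}$-simulation is a family $R^v_\tau\subseteq\mathit{Val}(\tau)^2$, $R^c_\tau\subseteq\mathit{Com}(\tau)^2$ with: (1) $V R^v_{\mathbf{N}} W\Rightarrow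 V=W$; (2) $M R^c_\tau N\Rightarrow |M|\,\mathcal{O}(R^v_\tau)\,|N|$; (3) $V R^v_{\tau'\to\tau} W\Rightarrow \forall U\in\mathit{Val}(\tau')$, $VU\,R^c_\tau\,WU$. Applicative $\mathcal{O}$-similarity is the union of all applicative $\mathcal{O}$-simulations. *)

theory Defs
  imports Main
begin

datatype ty = TUnit | TNat | TArr ty ty

text \<open>Arities: alpha^n -> alpha, N x alpha^n -> alpha, alpha^N -> alpha, N x alpha^N -> alpha.\<close>
datatype arity = AFin nat | APFin nat | AInf | APInf

datatype 'o val =
    Star
  | Zero
  | Succ "'o val"
  | Lam ty "'o comp"           \<comment> \<open>binds de Bruijn index 0 in the body\<close>
  | Var nat
and 'o comp =
    App "'o val" "'o val"
  | Ret "'o val"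
  | Let "'o comp" "'o comp"    \<comment> \<open>let M => x in N; x bound in N\<close>
  | Fix ty "'o val"            \<comment> \<open>fix(V), annotated with the argument type rho\<close>
  | Case "'o val" "'o comp" "'o comp"  \<comment> \<open>case V of Z => M; S(x) => N; x bound in N\<close>
  | OpF 'o "'o comp list"
  | OpPF 'o "'o val" "'o comp list"
  | OpI 'o "'o val"
  | OpPI 'o "'o val" "'o val"

primrec num :: "nat \<Rightarrow> 'o val" where
  "num 0 = Zero"
| "num (Suc n) = Succ (num n)"

fun nat_of :: "'o val \<Rightarrow> nat" where
  "nat_of Zero = 0"
| "nat_of (Succ v) = Suc (nat_of v)"
| "nat_of _ = 0"

inductive vtyp :: "('o \<Rightarrow> arity) \<Rightarrow> ty list \<Rightarrow> 'o val \<Rightarrow> ty \<Rightarrow> bool"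
  and ctyp :: "('o \<Rightarrow> arity) \<Rightarrow> ty list \<Rightarrow> 'o comp \<Rightarrow> ty \<Rightarrow> bool"
  for ar :: "'o \<Rightarrow> arity" where
  "vtyp ar G Star TUnit"
| "vtyp ar G Zero TNat"
| "vtyp ar G V TNat \<Longrightarrow> vtyp ar G (Succ V) TNat"
| "ctyp ar (t # G) M t' \<Longrightarrow> vtyp ar G (Lam t M) (TArr t t')"
| "i < length G \<Longrightarrow> vtyp ar G (Var i) (G ! i)"
| "vtyp ar G V (TArr t t') \<Longrightarrow> vtyp ar G W t \<Longrightarrow> ctyp ar G (App V W) t'"
| "vtyp ar G V t \<Longrightarrow> ctyp ar G (Ret V) t"
| "ctyp ar G M t \<Longrightarrow> ctyp ar (t # G) N t' \<Longrightarrow> ctyp ar G (Let M N) t'"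
| "vtyp ar G V (TArr (TArr r t) (TArr r t)) \<Longrightarrow> ctyp ar G (Fix r V) (TArr r t)"
| "vtyp ar G V TNat \<Longrightarrow> ctyp ar G M t \<Longrightarrow> ctyp ar (TNat # G) N t \<Longrightarrow> ctyp ar G (Case V M N) t"
| "ar s = AFin n \<Longrightarrow> length Ms = n \<Longrightarrow> (\<forall>M\<in>set Ms. ctyp ar G M t) \<Longrightarrow> ctyp ar G (OpF s Ms) t"
| "ar s = APFin n \<Longrightarrow> vtyp ar G V TNat \<Longrightarrow> length Ms = n \<Longrightarrow> (\<forall>M\<in>set Ms. ctyp ar G M t)
     \<Longrightarrow> ctyp ar G (OpPF s V Ms) t"
| "ar s = AInf \<Longrightarrow> vtyp ar G V (TArr TNat t) \<Longrightarrow> ctyp ar G (OpI s V) t"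
| "ar s = APInf \<Longrightarrow> vtyp ar G V TNat \<Longrightarrow> vtyp ar G W (TArr TNat t) \<Longrightarrow> ctyp ar G (OpPI s V W) t"

definition Val :: "('o \<Rightarrow> arity) \<Rightarrow> ty \<Rightarrow> 'o val set" where
  "Val ar t = {V. vtyp ar [] V t}"

definition Com :: "('o \<Rightarrow> arity) \<Rightarrow> ty \<Rightarrow> 'o comp set" where
  "Com ar t = {M. ctyp ar [] M t}"

section \<open>Substitution of a closed value and the stack machine\<close>

primrec substv :: "nat \<Rightarrow> 'o val \<Rightarrow> 'o val \<Rightarrow> 'o val"
  and substc :: "nat \<Rightarrow> 'o val \<Rightarrow> 'o comp \<Rightarrow> 'o comp" where
  "substv k U Star = Star"
| "substv k U Zero = Zero"
| "substv k U (Succ V) = Succ (substv k U V)"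
| "substv k U (Lam t M) = Lam t (substc (Suc k) U M)"
| "substv k U (Var i) = (if i = k then U else if k < i then Var (i - 1) else Var i)"
| "substc k U (App V W) = App (substv k U V) (substv k U W)"
| "substc k U (Ret V) = Ret (substv k U V)"
| "substc k U (Let M N) = Let (substc k U M) (substc (Suc k) U N)"
| "substc k U (Fix t V) = Fix t (substv k U V)"
| "substc k U (Case V M N) = Case (substv k U V) (substc k U M) (substc (Suc k) U N)"
| "substc k U (OpF s Ms) = OpF s (map (substc k U) Ms)"
| "substc k U (OpPF s V Ms) = OpPF s (substv k U V) (map (substc k U) Ms)"
| "substc k U (OpI s V) = OpI s (substv k U V)"
| "substc k U (OpPI s V W) = OpPI s (substv k U V) (substv k U W)"

type_synonym 'o conf = "'o comp list \<times> 'o comp"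

fun step :: "'o conf \<Rightarrow> 'o conf option" where
  "step (S, App (Lam t M) V) = Some (S, substc 0 V M)"
| "step (S, Let M N) = Some (N # S, M)"
| "step (N # S, Ret V) = Some (S, substc 0 V N)"
| "step (S, Fix r V) = Some (S, App V (Lam r (Let (Fix r V) (App (Var 0) (Var 1)))))"
| "step (S, Case Zero M N) = Some (S, M)"
| "step (S, Case (Succ V) M N) = Some (S, substc 0 V N)"
| "step _ = None"

definition reach :: "'o conf \<Rightarrow> 'o conf \<Rightarrow> bool" where
  "reach = (\<lambda>c c'. step c = Some c')\<^sup>*\<^sup>*"

definition terminates :: "'o conf \<Rightarrow> bool" where
  "terminates c = (\<exists>c'. reach c c' \<and> step c' = None)"

definition final :: "'o conf \<Rightarrow> 'o conf" where
  "final c = (SOME c'. reach c c' \<and> step c' = None)"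

text \<open>Leaves Bot or Leaf x; nodes labelled by an operation and a parameter m
  (0 for operations without N-parameter), with a finite list or an N-indexed family of children.\<close>
codatatype ('o, 'a) etree =
    Bot
  | Leaf 'a
  | Node 'o nat "('o, 'a) etree list"
  | NodeI 'o nat "nat \<Rightarrow> ('o, 'a) etree"

coinductive wft :: "('o \<Rightarrow> arity) \<Rightarrow> ('o, 'a) etree \<Rightarrow> bool" for ar where
  "wft ar Bot"
| "wft ar (Leaf x)"
| "ar s = AFin n \<Longrightarrow> length ts = n \<Longrightarrow> (\<forall>t\<in>set ts. wft ar t) \<Longrightarrow> wft ar (Node s 0 ts)"
| "ar s = APFin n \<Longrightarrow> length ts = n \<Longrightarrow> (\<forall>t\<in>set ts. wft ar t) \<Longrightarrow> wft ar (Node s m ts)"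
| "ar s = AInf \<Longrightarrow> (\<forall>i. wft ar (f i)) \<Longrightarrow> wft ar (NodeI s 0 f)"
| "ar s = APInf \<Longrightarrow> (\<forall>i. wft ar (f i)) \<Longrightarrow> wft ar (NodeI s m f)"

text \<open>t \<le> t' iff t results from t' by replacing (possibly infinitely many) subtrees by Bot.\<close>
coinductive tle :: "('o, 'a) etree \<Rightarrow> ('o, 'a) etree \<Rightarrow> bool" where
  "tle Bot t"
| "tle (Leaf x) (Leaf x)"
| "list_all2 tle ts us \<Longrightarrow> tle (Node s m ts) (Node s m us)"
| "(\<forall>i. tle (f i) (g i)) \<Longrightarrow> tle (NodeI s m f) (NodeI s m g)"

primcorec restr :: "'a set \<Rightarrow> ('o, 'a) etree \<Rightarrow> ('o, unit) etree" where
  "restr P t = (case t of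
       Bot \<Rightarrow> Bot
     | Leaf x \<Rightarrow> (if x \<in> P then Leaf () else Bot)
     | Node s m ts \<Rightarrow> Node s m (map (restr P) ts)
     | NodeI s m f \<Rightarrow> NodeI s m (\<lambda>i. restr P (f i)))"

text \<open>Observation of the terminal configuration reached (if any) by the stack machine.\<close>
datatype (discs_sels) 'o obs =
    OBot
  | OLeaf "'o val"
  | ONode 'o nat "'o conf list"
  | ONodeI 'o nat "nat \<Rightarrow> 'o conf"

fun obs_of_final :: "'o conf \<Rightarrow> 'o obs" where
  "obs_of_final ([], Ret V) = OLeaf V"
| "obs_of_final (S, OpF s Ms) = ONode s 0 (map (\<lambda>N. (S, N)) Ms)"
| "obs_of_final (S, OpPF s V Ms) = ONode s (nat_of V) (map (\<lambda>N. (S, N)) Ms)"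
| "obs_of_final (S, OpI s V) = ONodeI s 0 (\<lambda>i. (S, App V (num i)))"
| "obs_of_final (S, OpPI s V W) = ONodeI s (nat_of V) (\<lambda>i. (S, App W (num i)))"
| "obs_of_final _ = OBot"

definition observe :: "'o conf \<Rightarrow> 'o obs" where
  "observe c = (if terminates c then obs_of_final (final c) else OBot)"

primcorec ctree :: "'o conf \<Rightarrow> ('o, 'o val) etree" where
  "ctree c = (case observe c of
       OBot \<Rightarrow> Bot
     | OLeaf V \<Rightarrow> Leaf V
     | ONode s m cs \<Rightarrow> Node s m (map ctree cs)
     | ONodeI s m f \<Rightarrow> NodeI s m (\<lambda>i. ctree (f i)))"

definition optree :: "'o comp \<Rightarrow> ('o, 'o val) etree" where
  "optree M = ctree ([], M)"

definition upclosed_modality :: "('o \<Rightarrow> arity) \<Rightarrow> ('o, unit) etree set \<Rightarrow> bool" where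
  "upclosed_modality ar mo \<longleftrightarrow> mo \<subseteq> {t. wft ar t} \<and>
     (\<forall>t t'. t \<in> mo \<longrightarrow> tle t t' \<longrightarrow> wft ar t' \<longrightarrow> t' \<in> mo)"

definition modal :: "('o, unit) etree set \<Rightarrow> 'a set \<Rightarrow> ('o, 'a) etree set" where
  "modal mo A = {t. restr A t \<in> mo}"

section \<open>The logic V+ (formulas represented by their denotations)\<close>

inductive isVF :: "('o \<Rightarrow> arity) \<Rightarrow> ('o, unit) etree set set \<Rightarrow> ty \<Rightarrow> 'o val set \<Rightarrow> bool"
  and isCF :: "('o \<Rightarrow> arity) \<Rightarrow> ('o, unit) etree set set \<Rightarrow> ty \<Rightarrow> 'o comp set \<Rightarrow> bool"
  for ar Mods where
  VF_num: "isVF ar Mods TNat {num n}"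
| VF_app: "V \<in> Val ar t \<Longrightarrow> isCF ar Mods t' Phi \<Longrightarrow>
     isVF ar Mods (TArr t t') {W \<in> Val ar (TArr t t'). App W V \<in> Phi}"
| VF_and: "(\<forall>X\<in>F. isVF ar Mods t X) \<Longrightarrow> isVF ar Mods t (Val ar t \<inter> \<Inter>F)"
| VF_or: "(\<forall>X\<in>F. isVF ar Mods t X) \<Longrightarrow> isVF ar Mods t (\<Union>F)"
| CF_mod: "mo \<in> Mods \<Longrightarrow> isVF ar Mods t phi \<Longrightarrow> isCF ar Mods t {M \<in> Com ar t. optree M \<in> modal mo phi}"
| CF_and: "(\<forall>X\<in>F. isCF ar Mods t X) \<Longrightarrow> isCF ar Mods t (Com ar t \<inter> \<Inter>F)"
| CF_or: "(\<forall>X\<in>F. isCF ar Mods t X) \<Longrightarrow> isCF ar Mods t (\<Union>F)"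

definition log_vle :: "('o \<Rightarrow> arity) \<Rightarrow> ('o, unit) etree set set \<Rightarrow> ty \<Rightarrow> 'o val \<Rightarrow> 'o val \<Rightarrow> bool" where
  "log_vle ar Mods t V W \<longleftrightarrow> (\<forall>X. isVF ar Mods t X \<longrightarrow> V \<in> X \<longrightarrow> W \<in> X)"

definition log_cle :: "('o \<Rightarrow> arity) \<Rightarrow> ('o, unit) etree set set \<Rightarrow> ty \<Rightarrow> 'o comp \<Rightarrow> 'o comp \<Rightarrow> bool" where
  "log_cle ar Mods t M N \<longleftrightarrow> (\<forall>X. isCF ar Mods t X \<longrightarrow> M \<in> X \<longrightarrow> N \<in> X)"

definition relator :: "('o, unit) etree set set \<Rightarrow> 'a set \<Rightarrow> ('a \<times> 'a) set \<Rightarrow>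
    ('o, 'a) etree \<Rightarrow> ('o, 'a) etree \<Rightarrow> bool" where
  "relator Mods X R t t' \<longleftrightarrow> (\<forall>A. A \<subseteq> X \<longrightarrow> (\<forall>mo\<in>Mods. t \<in> modal mo A \<longrightarrow> t' \<in> modal mo (R `` A)))"

definition app_sim :: "('o \<Rightarrow> arity) \<Rightarrow> ('o, unit) etree set set \<Rightarrow>
    (ty \<Rightarrow> ('o val \<times> 'o val) set) \<Rightarrow> (ty \<Rightarrow> ('o comp \<times> 'o comp) set) \<Rightarrow> bool" where
  "app_sim ar Mods Rv Rc \<longleftrightarrow>
     (\<forall>t. Rv t \<subseteq> Val ar t \<times> Val ar t \<and> Rc t \<subseteq> Com ar t \<times> Com ar t) \<and>
     (\<forall>V W. (V, W) \<in> Rv TNat \<longrightarrow> V = W) \<and>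
     (\<forall>t M N. (M, N) \<in> Rc t \<longrightarrow> relator Mods (Val ar t) (Rv t) (optree M) (optree N)) \<and>
     (\<forall>t' t V W. (V, W) \<in> Rv (TArr t' t) \<longrightarrow> (\<forall>U\<in>Val ar t'. (App V U, App W U) \<in> Rc t))"

definition vsim :: "('o \<Rightarrow> arity) \<Rightarrow> ('o, unit) etree set set \<Rightarrow> ty \<Rightarrow> 'o val \<Rightarrow> 'o val \<Rightarrow> bool" where
  "vsim ar Mods t V W \<longleftrightarrow> (\<exists>Rv Rc. app_sim ar Mods Rv Rc \<and> (V, W) \<in> Rv t)"

definition csim :: "('o \<Rightarrow> arity) \<Rightarrow> ('o, unit) etree set set \<Rightarrow> ty \<Rightarrow> 'o comp \<Rightarrow> 'o comp \<Rightarrow> bool" where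
  "csim ar Mods t M N \<longleftrightarrow> (\<exists>Rv Rc. app_sim ar Mods Rv Rc \<and> (M, N) \<in> Rc t)"

end

theory Submission
  imports Defs
begin

lemma restr_simps[simp]:
  "restr P Bot = Bot"
  "restr P (Leaf x) = (if x \<in> P then Leaf () else Bot)"
  "restr P (Node s m ts) = Node s m (map (restr P) ts)"
  "restr P (NodeI s m f) = NodeI s m (\<lambda>i. restr P (f i))"
  by (subst restr.code; simp)+

lemma restr_mono: "A \<subseteq> B \<Longrightarrow> tle (restr A t) (restr B t)"
proof -
  assume AB: "A \<subseteq> B"
  have "\<exists>t. a = restr A t \<and> b = restr B t \<Longrightarrow> tle a b" for a b
  proof (coinduction arbitrary: a b rule: tle.coinduct)
    case (tle a b)
    then obtain t where t: "a = restr A t" "b = restr B t" by blast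
    show ?case
    proof (cases t)
      case Bot then show ?thesis using t by simp
    next
      case (Leaf x) then show ?thesis using t AB by auto
    next
      case (Node s m ts) then show ?thesis using t
        by (auto simp: list_all2_map1 list_all2_map2 intro!: list_all2_refl)
    next
      case (NodeI s m f) then show ?thesis using t by auto
    qed
  qed
  then show ?thesis by blast
qed

lemma restr_wft: assumes w0: "wft ar (restr A t)" shows "wft ar (restr B t)"
proof -
  have H: "\<exists>t. u = restr B t \<and> wft ar (restr A t) \<Longrightarrow> wft ar u" for u
  proof (coinduction arbitrary: u rule: wft.coinduct)
    case (wft u)
    then obtain t where t: "u = restr B t" "wft ar (restr A t)" by blast
    show ?case
    proof (cases t)
      case Bot then show ?thesis using t by simp
    next
      case (Leaf x) then show ?thesis using t by auto
    next
      case (Node s m ts)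
      have w: "wft ar (Node s m (map (restr A) ts))" using t Node by simp
      have u: "u = Node s m (map (restr B) ts)" using t Node by simp
      have ch: "\<forall>x\<in>set (map (restr B) ts). (\<exists>u. x = u \<and> (\<exists>t. u = restr B t \<and> wft ar (restr A t))) \<or> wft ar x"
      proof
        fix x assume "x \<in> set (map (restr B) ts)"
        then obtain y where y: "y \<in> set ts" "x = restr B y" by auto
        have "\<forall>z\<in>set (map (restr A) ts). wft ar z" using w by (cases rule: wft.cases) auto
        then have "wft ar (restr A y)" using y(1) by simp
        then show "(\<exists>u. x = u \<and> (\<exists>t. u = restr B t \<and> wft ar (restr A t))) \<or> wft ar x"
          using y(2) by blast
      qed
      from w show ?thesis
      proof (cases rule: wft.cases)
        case (3 n)
        then show ?thesis using u ch by auto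
      next
        case (4 n)
        then show ?thesis using u ch by auto
      qed
    next
      case (NodeI s m f)
      have w: "wft ar (NodeI s m (\<lambda>i. restr A (f i)))" using t NodeI by simp
      have u: "u = NodeI s m (\<lambda>i. restr B (f i))" using t NodeI by simp
      have "\<forall>i. wft ar (restr A (f i))" using w by (cases rule: wft.cases) auto
      then have ch: "\<forall>i. (\<exists>u. restr B (f i) = u \<and> (\<exists>t. u = restr B t \<and> wft ar (restr A t))) \<or> wft ar (restr B (f i))"
        by blast
      from w show ?thesis
      proof (cases rule: wft.cases)
        case 5
        then show ?thesis using u ch by auto
      next
        case 6
        then show ?thesis using u ch by auto
      qed
    qed
  qed
  show ?thesis by (rule H) (use w0 in blast)
qed

lemma canon_aux: "vtyp ar G V t \<Longrightarrow> G = [] \<Longrightarrow> t = TNat \<Longrightarrow> \<exists>n. V = num n"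
  and "ctyp ar G M t \<Longrightarrow> True"
proof (induction rule: vtyp_ctyp.inducts)
  case (2 G)
  have "Zero = num 0" by simp
  then show ?case by blast
next
  case (3 G V)
  then obtain n where "V = num n" by blast
  then have "Succ V = num (Suc n)" by simp
  then show ?case by blast
qed simp_all

lemma canon: "V \<in> Val ar TNat \<Longrightarrow> \<exists>n. V = num n"
  using canon_aux(1) unfolding Val_def by blast

lemma num_typ: "vtyp ar G (num n) TNat"
  by (induction n) (simp_all add: vtyp_ctyp.intros(2,3))

lemma VF_sub: "isVF ar Mods t X \<Longrightarrow> X \<subseteq> Val ar t"
  and CF_sub: "isCF ar Mods t Y \<Longrightarrow> Y \<subseteq> Com ar t"
proof (induction rule: isVF_isCF.inducts)
  case (VF_num n)
  then show ?case by (simp add: Val_def num_typ)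
qed blast+

lemma formula_closed:
  assumes sim: "app_sim ar Mods Rv Rc" and up: "\<forall>mo\<in>Mods. upclosed_modality ar mo"
  shows "isVF ar Mods t X \<Longrightarrow> V \<in> X \<Longrightarrow> (V, W) \<in> Rv t \<Longrightarrow> W \<in> X"
    and "isCF ar Mods t Y \<Longrightarrow> M \<in> Y \<Longrightarrow> (M, N) \<in> Rc t \<Longrightarrow> N \<in> Y"
proof (induction arbitrary: V W and M N rule: isVF_isCF.inducts)
  case (VF_num n)
  then show ?case using sim unfolding app_sim_def by auto
next
  case (VF_app V0 t t' Phi)
  then show ?case using sim unfolding app_sim_def by blast
next
  case (VF_and F t)
  then show ?case using sim unfolding app_sim_def by blast
next
  case (VF_or F t)
  then show ?case by blast
next
  case (CF_mod mo t phi)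
  have mo: "mo \<in> Mods" and hphi: "isVF ar Mods t phi" using CF_mod by blast+
  have IH: "\<And>V W. V \<in> phi \<Longrightarrow> (V, W) \<in> Rv t \<Longrightarrow> W \<in> phi" using CF_mod by blast
  have phiV: "phi \<subseteq> Val ar t" using hphi by (rule VF_sub)
  have MN: "relator Mods (Val ar t) (Rv t) (optree M) (optree N)" "N \<in> Com ar t"
    using sim CF_mod.prems(2) unfolding app_sim_def by blast+
  have "optree M \<in> modal mo phi" using CF_mod.prems(1) by blast
  then have "optree N \<in> modal mo (Rv t `` phi)"
    using MN(1) phiV mo unfolding relator_def by blast
  then have r: "restr (Rv t `` phi) (optree N) \<in> mo" unfolding modal_def by simp
  have sub: "Rv t `` phi \<subseteq> phi" using IH by blast
  have um: "upclosed_modality ar mo" using up mo by blast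
  have "wft ar (restr (Rv t `` phi) (optree N))" using r um unfolding upclosed_modality_def by blast
  then have "wft ar (restr phi (optree N))" by (rule restr_wft)
  moreover have "tle (restr (Rv t `` phi) (optree N)) (restr phi (optree N))"
    using sub by (rule restr_mono)
  ultimately have "restr phi (optree N) \<in> mo" using r um unfolding upclosed_modality_def by blast
  then show ?case using MN(2) unfolding modal_def by simp
next
  case (CF_and F t)
  then show ?case using sim unfolding app_sim_def by blast
next
  case (CF_or F t)
  then show ?case by blast
qed

theorem theorem2:
  fixes ar :: "'o \<Rightarrow> arity"
    and Mods :: "('o, unit) etree set set"
  assumes "\<forall>mo\<in>Mods. upclosed_modality ar mo"
  shows "(\<forall>t V W. V \<in> Val ar t \<longrightarrow> W \<in> Val ar t \<longrightarrow> (log_vle ar Mods t V W \<longleftrightarrow> vsim ar Mods t V W))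
       \<and> (\<forall>t M N. M \<in> Com ar t \<longrightarrow> N \<in> Com ar t \<longrightarrow> (log_cle ar Mods t M N \<longleftrightarrow> csim ar Mods t M N))"
proof -
  define Rv where "Rv t = {(V, W). V \<in> Val ar t \<and> W \<in> Val ar t \<and> log_vle ar Mods t V W}" for t
  define Rc where "Rc t = {(M, N). M \<in> Com ar t \<and> N \<in> Com ar t \<and> log_cle ar Mods t M N}" for t
  have upset: "isVF ar Mods t (Rv t `` A)" if "A \<subseteq> Val ar t" for t A
  proof -
    let ?U = "\<lambda>V. Val ar t \<inter> \<Inter>{X. isVF ar Mods t X \<and> V \<in> X}"
    have eq: "Rv t `` A = \<Union>(?U ` A)"
    proof (rule set_eqI, rule iffI)
      fix W assume "W \<in> Rv t `` A"
      then obtain V where V: "V \<in> A" "(V, W) \<in> Rv t" by (rule ImageE)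
      then have "W \<in> ?U V" unfolding Rv_def log_vle_def by auto
      then show "W \<in> \<Union>(?U ` A)" using V(1) by (rule UN_I[rotated])
    next
      fix W assume "W \<in> \<Union>(?U ` A)"
      then obtain V where V: "V \<in> A" "W \<in> ?U V" by (rule UN_E)
      have "V \<in> Val ar t" using V(1) that by blast
      then have "(V, W) \<in> Rv t" using V(2) unfolding Rv_def log_vle_def by auto
      then show "W \<in> Rv t `` A" using V(1) by (rule rev_ImageI[rotated])
    qed
    have "isVF ar Mods t (\<Union>(?U ` A))"
    proof (rule VF_or, rule ballI)
      fix Y assume "Y \<in> ?U ` A"
      then obtain V where Y: "Y = ?U V" by blast
      have "isVF ar Mods t (?U V)" by (rule VF_and) blast
      then show "isVF ar Mods t Y" using Y by simp
    qed
    then show ?thesis using eq by simp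
  qed
  have sim: "app_sim ar Mods Rv Rc"
    unfolding app_sim_def
  proof (intro conjI allI impI ballI)
    fix t show "Rv t \<subseteq> Val ar t \<times> Val ar t"
      unfolding Rv_def by blast
  next
    fix t show "Rc t \<subseteq> Com ar t \<times> Com ar t"
      unfolding Rc_def by blast
  next
    fix V W assume "(V, W) \<in> Rv TNat"
    then have V: "V \<in> Val ar TNat" and l: "log_vle ar Mods TNat V W" unfolding Rv_def by auto
    obtain n where n: "V = num n" using canon[OF V] by blast
    have "W \<in> {num n}" using l n VF_num unfolding log_vle_def by blast
    then show "V = W" using n by simp
  next
    fix t' t V W U assume VW: "(V, W) \<in> Rv (TArr t' t)" and U: "U \<in> Val ar t'"
    then have V: "V \<in> Val ar (TArr t' t)" and W: "W \<in> Val ar (TArr t' t)"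
      and l: "log_vle ar Mods (TArr t' t) V W" unfolding Rv_def by auto
    have c: "App V U \<in> Com ar t" "App W U \<in> Com ar t"
      using V W U unfolding Val_def Com_def by (auto intro: vtyp_ctyp.intros(6))
    have "log_cle ar Mods t (App V U) (App W U)"
      unfolding log_cle_def
    proof (intro allI impI)
      fix X assume X: "isCF ar Mods t X" "App V U \<in> X"
      have "isVF ar Mods (TArr t' t) {W \<in> Val ar (TArr t' t). App W U \<in> X}"
        using U X(1) by (rule VF_app)
      then show "App W U \<in> X" using l V W X(2) unfolding log_vle_def by blast
    qed
    then show "(App V U, App W U) \<in> Rc t" using c unfolding Rc_def by auto
  next
    fix t M N assume "(M, N) \<in> Rc t"
    then have N: "N \<in> Com ar t" and l: "log_cle ar Mods t M N" unfolding Rc_def by auto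
    show "relator Mods (Val ar t) (Rv t) (optree M) (optree N)"
      unfolding relator_def
    proof (intro allI impI ballI)
      fix A mo assume A: "A \<subseteq> Val ar t" and mo: "mo \<in> Mods" and M: "optree M \<in> modal mo A"
      have um: "upclosed_modality ar mo" using assms mo by blast
      have AR: "A \<subseteq> Rv t `` A"
      proof
        fix V assume "V \<in> A"
        moreover have "(V, V) \<in> Rv t" using A \<open>V \<in> A\<close> unfolding Rv_def log_vle_def by blast
        ultimately show "V \<in> Rv t `` A" by (rule rev_ImageI)
      qed
      have r: "restr A (optree M) \<in> mo" using M unfolding modal_def by simp
      then have "wft ar (restr A (optree M))" using um unfolding upclosed_modality_def by blast
      then have "wft ar (restr (Rv t `` A) (optree M))" by (rule restr_wft)
      moreover have "tle (restr A (optree M)) (restr (Rv t `` A) (optree M))"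
        using AR by (rule restr_mono)
      ultimately have "restr (Rv t `` A) (optree M) \<in> mo"
        using r um unfolding upclosed_modality_def by blast
      moreover have "M \<in> Com ar t" using \<open>(M, N) \<in> Rc t\<close> unfolding Rc_def by auto
      moreover have "isCF ar Mods t {M \<in> Com ar t. optree M \<in> modal mo (Rv t `` A)}"
        using mo upset[OF A] by (rule CF_mod)
      ultimately have "M \<in> {M \<in> Com ar t. optree M \<in> modal mo (Rv t `` A)}"
        "isCF ar Mods t {M \<in> Com ar t. optree M \<in> modal mo (Rv t `` A)}"
        unfolding modal_def by simp_all
      then have "N \<in> {M \<in> Com ar t. optree M \<in> modal mo (Rv t `` A)}"
        using l unfolding log_cle_def by blast
      then show "optree N \<in> modal mo (Rv t `` A)" by simp
    qed
  qed
  show ?thesis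
  proof (intro conjI allI impI iffI)
    fix t V W assume "V \<in> Val ar t" "W \<in> Val ar t" "log_vle ar Mods t V W"
    then have "(V, W) \<in> Rv t" unfolding Rv_def by simp
    then show "vsim ar Mods t V W" unfolding vsim_def using sim by blast
  next
    fix t V W assume "vsim ar Mods t V W"
    then obtain Rv' Rc' where s': "app_sim ar Mods Rv' Rc'" and VW: "(V, W) \<in> Rv' t"
      unfolding vsim_def by blast
    show "log_vle ar Mods t V W" unfolding log_vle_def
    proof (intro allI impI)
      fix X assume "isVF ar Mods t X" "V \<in> X"
      then show "W \<in> X" using formula_closed(1)[OF s' assms] VW by blast
    qed
  next
    fix t M N assume "M \<in> Com ar t" "N \<in> Com ar t" "log_cle ar Mods t M N"
    then have "(M, N) \<in> Rc t" unfolding Rc_def by simp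
    then show "csim ar Mods t M N" unfolding csim_def using sim by blast
  next
    fix t M N assume "csim ar Mods t M N"
    then obtain Rv' Rc' where s': "app_sim ar Mods Rv' Rc'" and MN: "(M, N) \<in> Rc' t"
      unfolding csim_def by blast
    show "log_cle ar Mods t M N" unfolding log_cle_def
    proof (intro allI impI)
      fix X assume "isCF ar Mods t X" "M \<in> X"
      then show "N \<in> X" using formula_closed(2)[OF s' assms] MN by blast
    qed
  qed
qed

end
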